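(* In the one-parameter family of $SU(2)$-invariant hyperKähler structures on the non-zero nilpotent orbit $\mathcal O\subset\mathfrak{sl}(2,\mathbb C)$ with complex symplectic form $k^2\omega_c^{\mathcal O}$ and Kähler potential $\rho$ satisfying $\rho'(\eta)=\frac1\eta\sqrt{k^2\eta+c}$ ($c\ge0$), the Kähler potential $\rho$ is a hyperKähler potential if and only if $c=0$. In that case, up to an additive constant, $\rho=2k\sqrt\eta$, and $\rho(te)=4k^2t$ for $t>0$.
   Context: $\langle\cdot,\cdot\rangle_{\mathfrak{sl}(2)}$ is the negative Killing form of $\mathfrak{sl}(2,\mathbb C)$, $\sigma(X)=-\bar X^T$, $\eta(X)=k^2\langle X,\sigma X\rangle_{\mathfrak{sl}(2)}$, $e=\begin{pmatrix}0&1\\0&0\end{pmatrix}$. $\xi_A=[A,X]$, $I\xi_A=\xi_{iA}$, $\omega_c^{\mathcal O}(\xi_A,\xi_B)_X=\langle X,[A,B]\rangle_{\mathfrak{sl}(2)}$, and the complex symplectic form is $\omega_J+i\omega_K=k^2\omega_c^{\mathcal O}$. A hyperKähler potential is a function $\rho$ that is simultaneously a Kähler potential for $I$, $J$ and $K$, i.e. $\omega_L=-\tfrac12 dLd\rho$ for $L=I,J,K$ (with $(L\alpha)(Y)=-\alpha(LY)$). *)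

theory Defs
  imports "HOL-Analysis.Analysis"
begin

type_synonym mat2 = "complex^2^2"

definition cmul :: "complex \<Rightarrow> mat2 \<Rightarrow> mat2" where
  "cmul a M = (\<chi> i j. a * M$i$j)"

definition commut :: "mat2 \<Rightarrow> mat2 \<Rightarrow> mat2" where
  "commut A B = A ** B - B ** A"

definition sl2 :: "mat2 set" where
  "sl2 = {A. trace A = 0}"

text \<open>Negative Killing form of sl(2,C): the Killing form is B(X,Y) = tr(ad X ad Y) = 4 tr(XY).\<close>
definition kill_neg :: "mat2 \<Rightarrow> mat2 \<Rightarrow> complex" where
  "kill_neg X Y = - 4 * trace (X ** Y)"

definition sigma :: "mat2 \<Rightarrow> mat2" where
  "sigma X = (\<chi> i j. - cnj (X$j$i))"

definition eta :: "real \<Rightarrow> mat2 \<Rightarrow> real" where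
  "eta k X = k\<^sup>2 * Re (kill_neg X (sigma X))"

definition e_mat :: mat2 where
  "e_mat = (\<chi> i j. if i = 1 \<and> j = 2 then 1 else 0)"

definition nilorb :: "mat2 set" where
  "nilorb = {X. X \<in> sl2 \<and> X \<noteq> 0 \<and> X ** X = 0}"

definition xi :: "mat2 \<Rightarrow> mat2 \<Rightarrow> mat2" where
  "xi A X = commut A X"

definition tang :: "mat2 \<Rightarrow> mat2 set" where
  "tang X = {xi A X | A. A \<in> sl2}"

definition tgen :: "mat2 \<Rightarrow> mat2 \<Rightarrow> mat2" where
  "tgen X Y = (SOME A. A \<in> sl2 \<and> xi A X = Y)"

definition tderiv :: "(mat2 \<Rightarrow> real) \<Rightarrow> mat2 \<Rightarrow> mat2 \<Rightarrow> real" where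
  "tderiv h X V = (THE v. \<forall>\<gamma>. range \<gamma> \<subseteq> nilorb \<and> \<gamma> 0 = X \<and> (\<gamma> has_vector_derivative V) (at 0)
       \<longrightarrow> ((h \<circ> \<gamma>) has_real_derivative v) (at 0))"

text \<open>Lie bracket of (ambient) vector fields, [Y,Z]f = Y(Zf) - Z(Yf).\<close>
definition lie_bracket :: "(mat2 \<Rightarrow> mat2) \<Rightarrow> (mat2 \<Rightarrow> mat2) \<Rightarrow> mat2 \<Rightarrow> mat2" where
  "lie_bracket Y Z X = frechet_derivative Z (at X) (Y X) - frechet_derivative Y (at X) (Z X)"

text \<open>Exterior derivative of a 1-form alpha (alpha X V = value at point X on tangent vector V),
  evaluated on vector fields: d alpha(Y,Z) = Y(alpha Z) - Z(alpha Y) - alpha([Y,Z]).\<close>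
definition ext_d :: "(mat2 \<Rightarrow> mat2 \<Rightarrow> real) \<Rightarrow> (mat2 \<Rightarrow> mat2) \<Rightarrow> (mat2 \<Rightarrow> mat2) \<Rightarrow> mat2 \<Rightarrow> real" where
  "ext_d \<alpha> Y Z X = tderiv (\<lambda>p. \<alpha> p (Z p)) X (Y X) - tderiv (\<lambda>p. \<alpha> p (Y p)) X (Z X)
      - \<alpha> X (lie_bracket Y Z X)"

text \<open>A 2-form given on fundamental vector fields, evaluated on tangent vectors Y, Z at X.\<close>
definition dform :: "(mat2 \<Rightarrow> mat2 \<Rightarrow> real) \<Rightarrow> mat2 \<Rightarrow> mat2 \<Rightarrow> mat2 \<Rightarrow> real" where
  "dform \<alpha> X Y Z = ext_d \<alpha> (xi (tgen X Y)) (xi (tgen X Z)) X"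

definition Ldrho :: "(mat2 \<Rightarrow> mat2 \<Rightarrow> mat2) \<Rightarrow> (mat2 \<Rightarrow> real) \<Rightarrow> mat2 \<Rightarrow> mat2 \<Rightarrow> real" where
  "Ldrho L \<rho> X V = - tderiv \<rho> X (L X V)"

text \<open>Complex structure I: I xi_A = xi_{iA}, i.e. multiplication by i.\<close>
definition Iop :: "mat2 \<Rightarrow> mat2 \<Rightarrow> mat2" where
  "Iop X V = cmul \<i> V"

definition omegaI :: "(mat2 \<Rightarrow> real) \<Rightarrow> mat2 \<Rightarrow> mat2 \<Rightarrow> mat2 \<Rightarrow> real" where
  "omegaI \<rho> X Y Z = - 1/2 * dform (Ldrho Iop \<rho>) X Y Z"

text \<open>Metric g with omega_L(Y,Z) = g(Y, L Z).\<close>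
definition gmet :: "(mat2 \<Rightarrow> real) \<Rightarrow> mat2 \<Rightarrow> mat2 \<Rightarrow> mat2 \<Rightarrow> real" where
  "gmet \<rho> X Y Z = omegaI \<rho> X (Iop X Y) Z"

text \<open>omega_J + i omega_K = k^2 omega_c, omega_c(xi_A,xi_B)_X = <X,[A,B]>.\<close>
definition omegac :: "mat2 \<Rightarrow> mat2 \<Rightarrow> mat2 \<Rightarrow> complex" where
  "omegac X Y Z = kill_neg X (commut (tgen X Y) (tgen X Z))"

definition omegaJ :: "real \<Rightarrow> mat2 \<Rightarrow> mat2 \<Rightarrow> mat2 \<Rightarrow> real" where
  "omegaJ k X Y Z = Re (of_real (k\<^sup>2) * omegac X Y Z)"

definition omegaK :: "real \<Rightarrow> mat2 \<Rightarrow> mat2 \<Rightarrow> mat2 \<Rightarrow> real" where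
  "omegaK k X Y Z = Im (of_real (k\<^sup>2) * omegac X Y Z)"

definition Lop :: "(mat2 \<Rightarrow> mat2 \<Rightarrow> mat2 \<Rightarrow> real) \<Rightarrow> (mat2 \<Rightarrow> real) \<Rightarrow> mat2 \<Rightarrow> mat2 \<Rightarrow> mat2" where
  "Lop \<omega> \<rho> X Y = (THE W. W \<in> tang X \<and> (\<forall>Z\<in>tang X. gmet \<rho> X Z W = \<omega> X Z Y))"

definition Jop :: "real \<Rightarrow> (mat2 \<Rightarrow> real) \<Rightarrow> mat2 \<Rightarrow> mat2 \<Rightarrow> mat2" where
  "Jop k \<rho> = Lop (omegaJ k) \<rho>"

definition Kop :: "real \<Rightarrow> (mat2 \<Rightarrow> real) \<Rightarrow> mat2 \<Rightarrow> mat2 \<Rightarrow> mat2" where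
  "Kop k \<rho> = Lop (omegaK k) \<rho>"

definition kahler_pot_for :: "(mat2 \<Rightarrow> mat2 \<Rightarrow> mat2 \<Rightarrow> real) \<Rightarrow> (mat2 \<Rightarrow> mat2 \<Rightarrow> mat2) \<Rightarrow> (mat2 \<Rightarrow> real) \<Rightarrow> bool" where
  "kahler_pot_for \<omega> L \<rho> \<longleftrightarrow>
     (\<forall>X\<in>nilorb. \<forall>Y\<in>tang X. \<forall>Z\<in>tang X. \<omega> X Y Z = - 1/2 * dform (Ldrho L \<rho>) X Y Z)"

definition hk_potential :: "real \<Rightarrow> (mat2 \<Rightarrow> real) \<Rightarrow> bool" where
  "hk_potential k \<rho> \<longleftrightarrow> kahler_pot_for (omegaI \<rho>) Iop \<rho>
      \<and> kahler_pot_for (omegaJ k) (Jop k \<rho>) \<rho> \<and> kahler_pot_for (omegaK k) (Kop k \<rho>) \<rho>"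

end

theory Submission
  imports Defs
begin


definition mk :: "complex \<Rightarrow> complex \<Rightarrow> complex \<Rightarrow> complex \<Rightarrow> mat2" where
  "mk a b c d = (\<chi> i j. if i = 1 then (if j = 1 then a else b) else (if j = 1 then c else d))"

lemma mk_nth[simp]: "mk a b c d $ 1 $ 1 = a" "mk a b c d $ 1 $ 2 = b" "mk a b c d $ 2 $ 1 = c" "mk a b c d $ 2 $ 2 = d"
  by (simp_all add: mk_def)

lemma mat2_eq_iff: "(A::mat2) = B \<longleftrightarrow> A$1$1 = B$1$1 \<and> A$1$2 = B$1$2 \<and> A$2$1 = B$2$1 \<and> A$2$2 = B$2$2"
  by (auto simp: vec_eq_iff forall_2)

lemma mat2_mk: "(A::mat2) = mk (A$1$1) (A$1$2) (A$2$1) (A$2$2)"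
  by (simp add: mat2_eq_iff)

lemma mult_nth[simp]: "((A::mat2) ** B) $ i $ j = A$i$1 * B$1$j + A$i$2 * B$2$j"
  by (simp add: matrix_matrix_mult_def sum_2)

lemma trace2: "trace (A::mat2) = A$1$1 + A$2$2"
  by (simp add: trace_def sum_2)

lemma inner_mat2: "inner (P::mat2) Q = inner (P$1$1) (Q$1$1) + inner (P$1$2) (Q$1$2) + inner (P$2$1) (Q$2$1) + inner (P$2$2) (Q$2$2)"
  by (simp add: inner_vec_def sum_2)

lemma scaleR_nth[simp]: "(t *\<^sub>R (P::mat2)) $ i $ j = of_real t * P$i$j"
  apply simp by (simp add: scaleR_conv_of_real)
lemma cmul_nth[simp]: "cmul a M $ i $ j = a * M$i$j" by (simp add: cmul_def)
lemma sigma_nth[simp]: "sigma M $ i $ j = - cnj (M$j$i)" by (simp add: sigma_def)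

lemma eta_inner: "eta k X = 4 * k\<^sup>2 * inner X X"
  unfolding eta_def kill_neg_def by (simp add: trace2 inner_mat2 inner_complex_def algebra_simps power2_eq_square)

lemma sl2_iff: "A \<in> sl2 \<longleftrightarrow> A$2$2 = - A$1$1"
  by (auto simp: sl2_def trace2 eq_neg_iff_add_eq_0 add.commute)

lemma commut_nth[simp]: "commut A B $ i $ j = (A ** B - B ** A) $ i $ j" by (simp add: commut_def)

lemma commut_diff_left: "commut (A - B) X = commut A X - commut B X"
  by (simp add: mat2_eq_iff algebra_simps)
lemma commut_diff_right: "commut B (P - Q) = commut B P - commut B Q"
  by (simp add: mat2_eq_iff algebra_simps)
lemma commut_add_left: "commut (A + B) X = commut A X + commut B X"
  by (simp add: mat2_eq_iff algebra_simps)
lemma commut_add_right: "commut B (P + Q) = commut B P + commut B Q"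
  by (simp add: mat2_eq_iff algebra_simps)
lemma commut_scaleR_right: "commut B (t *\<^sub>R P) = t *\<^sub>R commut B P"
  by (simp add: mat2_eq_iff algebra_simps)
lemma commut_cmul_left: "commut (cmul a B) X = cmul a (commut B X)"
  by (simp add: mat2_eq_iff algebra_simps)
lemma jacobi: "commut (commut B A) X = commut B (commut A X) - commut A (commut B X)"
  by (simp add: mat2_eq_iff algebra_simps)
lemma cmul_diff: "cmul a (P - Q) = cmul a P - cmul a Q"
  by (simp add: mat2_eq_iff algebra_simps)
lemma cmul_add: "cmul a (P + Q) = cmul a P + cmul a Q"
  by (simp add: mat2_eq_iff algebra_simps)
lemma cmul_scaleR: "cmul a (t *\<^sub>R P) = t *\<^sub>R cmul a P"
  by (simp add: mat2_eq_iff algebra_simps)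
lemma cmul_cmul: "cmul a (cmul b P) = cmul (a * b) P"
  by (simp add: mat2_eq_iff algebra_simps)
lemma cmul_one: "cmul 1 P = P"
  by (simp add: mat2_eq_iff)
lemma inner_i_right: "inner P (cmul \<i> Q) = - inner (cmul \<i> P) Q"
  by (simp add: inner_mat2 inner_complex_def algebra_simps)
lemma inner_i_i: "inner (cmul \<i> P) (cmul \<i> Q) = inner P Q"
  by (simp add: inner_mat2 inner_complex_def algebra_simps)
lemma inner_i_self: "inner P (cmul \<i> P) = 0"
  by (simp add: inner_mat2 inner_complex_def algebra_simps)
lemma cmul_i_i: "cmul \<i> (cmul \<i> P) = - P"
  by (simp add: mat2_eq_iff)

lemma commut_sl2: "commut A B \<in> sl2"
  by (simp add: sl2_iff algebra_simps)
lemma cmul_sl2: "A \<in> sl2 \<Longrightarrow> cmul a A \<in> sl2"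
  by (simp add: sl2_iff)
lemma diff_sl2: "A \<in> sl2 \<Longrightarrow> B \<in> sl2 \<Longrightarrow> A - B \<in> sl2"
  by (simp add: sl2_iff)

definition pX :: "complex \<Rightarrow> complex \<Rightarrow> mat2" where
  "pX u v = mk (u *  v) (-(u^2)) (v^2) (-(u *  v))"
definition dpX :: "complex \<Rightarrow> complex \<Rightarrow> complex \<Rightarrow> complex \<Rightarrow> mat2" where
  "dpX u v a b = mk (a *  v + u * b) (-(2 * u * a)) (2 *  v * b) (-(a *  v + u * b))"

lemma pX_nilorb: "u \<noteq> 0 \<or> v \<noteq> 0 \<Longrightarrow> pX u v \<in> nilorb"
  by (auto simp: nilorb_def pX_def sl2_iff mat2_eq_iff algebra_simps power2_eq_square)

lemma commut_pX: "A \<in> sl2 \<Longrightarrow> commut A (pX u v) = dpX u v (A$1$1 * u + A$1$2 *  v) (A$2$1 * u + A$2$2 *  v)"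
  by (simp add: sl2_iff pX_def dpX_def mat2_eq_iff algebra_simps power2_eq_square)

lemma nilorb_pX: assumes "X \<in> nilorb" shows "\<exists>u v. (u \<noteq> 0 \<or> v \<noteq> 0) \<and> X = pX u v"
proof -
  define a where "a = X$1$1"
  define b where "b = X$1$2"
  define c where "c = X$2$1"
  have d: "X$2$2 = -a" using assms by (simp add: nilorb_def sl2_iff a_def)
  have sq: "X ** X = 0" using assms by (simp add: nilorb_def)
  have e: "a * a + b * c = 0" using arg_cong[OF sq, of "\<lambda>M. M$1$1"] by (simp add: a_def b_def c_def)
  have nz: "X \<noteq> 0" using assms by (simp add: nilorb_def)
  show ?thesis
  proof (cases "b = 0")
    case True
    then have "a = 0" using e by simp
    then have "c \<noteq> 0" using nz True d by (auto simp: mat2_eq_iff a_def b_def c_def)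
    define v where "v = csqrt c"
    have "v\<^sup>2 = c" by (simp add: v_def)
    then have "X = pX 0 v" using True \<open>a = 0\<close> d by (simp add: pX_def mat2_eq_iff a_def b_def c_def)
    moreover have "v \<noteq> 0" using \<open>v\<^sup>2 = c\<close> \<open>c \<noteq> 0\<close> by auto
    ultimately show ?thesis by blast
  next
    case False
    define u where "u = csqrt (-b)"
    have u2: "u\<^sup>2 = -b" by (simp add: u_def)
    have u0: "u \<noteq> 0" using u2 False by auto
    define v where "v = a / u"
    have "u * v = a" using u0 by (simp add: v_def)
    have "v\<^sup>2 = c" using u0 u2 e False by (simp add: v_def power_divide field_simps power2_eq_square) (metis add_eq_0_iff mult.commute)
    then have "X = pX u v" using \<open>u *  v = a\<close> u2 d by (simp add: pX_def mat2_eq_iff a_def b_def c_def)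
    then show ?thesis using u0 by blast
  qed
qed


lemma tangI: "A \<in> sl2 \<Longrightarrow> xi A X = Y \<Longrightarrow> Y \<in> tang X"
  unfolding tang_def by auto

lemma cm2: "cmod u * cmod u = Re u * Re u + Im u * Im u"
  using cmod_power2[of u] by (simp add: power2_eq_square)

lemma dpX_tang: assumes "u \<noteq> 0 \<or> v \<noteq> 0" shows "dpX u v a b \<in> tang (pX u v)"
proof (cases "u = 0")
  case False
  define A where "A = mk (a/u) 0 ((b + (a/u) * v)/u) (-(a/u))"
  have "A \<in> sl2" by (simp add: A_def sl2_iff)
  moreover have "xi A (pX u v) = dpX u v a b"
    unfolding xi_def using \<open>A \<in> sl2\<close> False
    by (simp add: commut_pX A_def field_simps)
  ultimately show ?thesis by (rule tangI)
next
  case True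
  then have v: "v \<noteq> 0" using assms by simp
  define A where "A = mk (-b/v) (a/v) 0 (b/v)"
  have "A \<in> sl2" by (simp add: A_def sl2_iff)
  moreover have "xi A (pX u v) = dpX u v a b"
    unfolding xi_def using \<open>A \<in> sl2\<close> True v
    by (simp add: commut_pX A_def field_simps)
  ultimately show ?thesis by (rule tangI)
qed

lemma dpX_inj: assumes "u \<noteq> 0 \<or> v \<noteq> 0" "dpX u v a b = dpX u v a' b'" shows "a = a' \<and> b = b'"
proof -
  have e: "a * v + u * b = a' * v + u * b'" "u * a = u * a'" "v * b = v * b'"
    using assms(2) by (simp_all add: dpX_def mat2_eq_iff)
  show ?thesis
  proof (cases "u = 0")
    case True then show ?thesis using e assms(1) by auto
  next
    case False then show ?thesis using e by auto
  qed
qed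

lemma tang_pX: "Y \<in> tang (pX u v) \<Longrightarrow> \<exists>A. A \<in> sl2 \<and> xi A (pX u v) = Y \<and> Y = dpX u v (A$1$1 * u + A$1$2 * v) (A$2$1 * u + A$2$2 * v)"
  unfolding tang_def xi_def using commut_pX by blast

lemma inner_pX: "inner (pX u v) (pX u v) = (cmod u ^ 2 + cmod v ^ 2)^2"
  apply (simp add: inner_mat2 inner_complex_def pX_def power2_eq_square cm2)
  apply algebra
  done

lemma inner_dpX: "inner (dpX u v z1 z2) (dpX u v w1 w2) = 2 * ((cmod u ^ 2 + cmod v ^ 2) * Re (cnj z1 * w1 + cnj z2 * w2) + Re ((cnj z1 * u + cnj z2 * v) * (cnj u * w1 + cnj v * w2)))"
  apply (simp add: inner_mat2 inner_complex_def dpX_def power2_eq_square cm2)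
  apply algebra
  done

lemma inner_pX_dpX: "inner (pX u v) (dpX u v z1 z2) = 2 * (cmod u ^ 2 + cmod v ^ 2) * Re (cnj u * z1 + cnj v * z2)"
  apply (simp add: inner_mat2 inner_complex_def pX_def dpX_def power2_eq_square cm2)
  apply algebra
  done

lemma trace_dpX_A: "A \<in> sl2 \<Longrightarrow> trace (dpX u v z1 z2 ** A) = 2 * (z2 * (A$1$1 * u + A$1$2 * v) - z1 * (A$2$1 * u + A$2$2 * v))"
  by (simp add: sl2_iff trace2 dpX_def algebra_simps)

lemma trace_A_pX: "A \<in> sl2 \<Longrightarrow> trace (A ** pX u v) = v * (A$1$1 * u + A$1$2 * v) - u * (A$2$1 * u + A$2$2 * v)"
  by (simp add: sl2_iff trace2 pX_def algebra_simps power2_eq_square)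

lemma cmul_dpX: "cmul a (dpX u v z1 z2) = dpX u v (a * z1) (a * z2)"
  by (simp add: dpX_def mat2_eq_iff algebra_simps)

lemma dpX_half: "dpX u v (u/2) (v/2) = pX u v"
  by (simp add: dpX_def pX_def mat2_eq_iff power2_eq_square)

lemma dpX_diff: "dpX u v a b - dpX u v a' b' = dpX u v (a - a') (b - b')"
  by (simp add: dpX_def mat2_eq_iff algebra_simps)

lemma pX_tang: "u \<noteq> 0 \<or> v \<noteq> 0 \<Longrightarrow> pX u v \<in> tang (pX u v)"
  using dpX_tang[of u v "u/2" "v/2"] by (simp add: dpX_half)

lemma tang_sub: assumes "Y \<in> tang X" "Z \<in> tang X" shows "Y - Z \<in> tang X"
proof -
  obtain A B where "A \<in> sl2" "B \<in> sl2" "Y = xi A X" "Z = xi B X" using assms unfolding tang_def by blast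
  then have "Y - Z = xi (A - B) X" "A - B \<in> sl2" by (simp_all add: xi_def commut_diff_left diff_sl2)
  then show ?thesis using tangI by metis
qed

lemma tang_cmul: assumes "Y \<in> tang X" shows "cmul a Y \<in> tang X"
proof -
  obtain A where "A \<in> sl2" "Y = xi A X" using assms unfolding tang_def by blast
  then have "cmul a Y = xi (cmul a A) X" "cmul a A \<in> sl2" by (simp_all add: xi_def commut_cmul_left cmul_sl2)
  then show ?thesis using tangI by metis
qed

lemma tgen: assumes "Y \<in> tang X" shows "tgen X Y \<in> sl2" "xi (tgen X Y) X = Y"
proof -
  have "\<exists>A. A \<in> sl2 \<and> xi A X = Y" using assms unfolding tang_def by blast
  then have "tgen X Y \<in> sl2 \<and> xi (tgen X Y) X = Y" unfolding tgen_def by (rule someI_ex)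
  then show "tgen X Y \<in> sl2" "xi (tgen X Y) X = Y" by auto
qed

lemma xi_tang: "A \<in> sl2 \<Longrightarrow> xi A X \<in> tang X"
  unfolding tang_def by blast

lemma trace_stab: assumes "X \<in> nilorb" "A \<in> sl2" "B \<in> sl2" "xi A X = xi B X"
  shows "trace (A ** X) = trace (B ** X)"
proof -
  obtain u v where uv: "u \<noteq> 0 \<or> v \<noteq> 0" "X = pX u v" using nilorb_pX[OF assms(1)] by blast
  have "dpX u v (A$1$1 * u + A$1$2 * v) (A$2$1 * u + A$2$2 * v) = dpX u v (B$1$1 * u + B$1$2 * v) (B$2$1 * u + B$2$2 * v)"
    using assms(4) uv(2) commut_pX[OF assms(2)] commut_pX[OF assms(3)] by (simp add: xi_def)
  from dpX_inj[OF uv(1) this] show ?thesis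
    using uv(2) trace_A_pX[OF assms(2)] trace_A_pX[OF assms(3)] by simp
qed


lemma poly_curve:
  fixes u v a b w1 w2 :: complex
  assumes nz: "\<And>t::real. u + of_real t * a + (of_real t)^2 * w1 \<noteq> 0 \<or> v + of_real t * b + (of_real t)^2 * w2 \<noteq> 0"
  shows "\<exists>\<gamma>. range \<gamma> \<subseteq> nilorb \<and> \<gamma> 0 = pX u v \<and> (\<gamma> has_vector_derivative dpX u v a b) (at 0)"
proof -
  define Q2 where "Q2 = mk (a * b + u * w2 + w1 * v) (-(a^2 + 2 * u * w1)) (b^2 + 2 * v * w2) (-(a * b + u * w2 + w1 * v))"
  define Q3 where "Q3 = mk (a * w2 + w1 * b) (-(2 * a * w1)) (2 * b * w2) (-(a * w2 + w1 * b))"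
  define Q4 where "Q4 = pX w1 w2"
  define \<gamma> where "\<gamma> = (\<lambda>t::real. pX (u + of_real t * a + (of_real t)^2 * w1) (v + of_real t * b + (of_real t)^2 * w2))"
  have geq: "\<gamma> = (\<lambda>t. pX u v + t *\<^sub>R dpX u v a b + (t^2) *\<^sub>R Q2 + (t^3) *\<^sub>R Q3 + (t^4) *\<^sub>R Q4)"
    apply (rule ext)
    apply (simp add: \<gamma>_def Q2_def Q3_def Q4_def pX_def dpX_def mat2_eq_iff del: scaleR_nth)
    apply (simp only: scaleR_conv_of_real of_real_power)
    apply (simp add: algebra_simps power2_eq_square power3_eq_cube power4_eq_xxxx)
    done
  have "((\<lambda>t. pX u v + t *\<^sub>R dpX u v a b + (t^2) *\<^sub>R Q2 + (t^3) *\<^sub>R Q3 + (t^4) *\<^sub>R Q4) has_vector_derivative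
        dpX u v a b) (at 0)"
    by (auto intro!: derivative_eq_intros)
  then have "(\<gamma> has_vector_derivative dpX u v a b) (at 0)" using geq by simp
  moreover have "range \<gamma> \<subseteq> nilorb" using nz by (auto simp: \<gamma>_def intro!: pX_nilorb)
  moreover have "\<gamma> 0 = pX u v" by (simp add: \<gamma>_def)
  ultimately show ?thesis by blast
qed

lemma curve_exists:
  assumes X: "X \<in> nilorb" and V: "V \<in> tang X"
  shows "\<exists>\<gamma>. range \<gamma> \<subseteq> nilorb \<and> \<gamma> 0 = X \<and> (\<gamma> has_vector_derivative V) (at 0)"
proof -
  obtain u v where uv: "u \<noteq> 0 \<or> v \<noteq> 0" "X = pX u v" using nilorb_pX[OF X] by blast
  obtain A where "A \<in> sl2" "V = dpX u v (A$1$1 * u + A$1$2 * v) (A$2$1 * u + A$2$2 * v)"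
    using tang_pX[of V u v] V uv by blast
  then obtain a b where V': "V = dpX u v a b" by blast
  show ?thesis
  proof (cases "\<exists>\<mu>. a = \<mu> * u \<and> b = \<mu> * v")
    case False
    have "\<And>t::real. u + of_real t * a + (of_real t)^2 * 0 \<noteq> 0 \<or> v + of_real t * b + (of_real t)^2 * 0 \<noteq> 0"
    proof (rule ccontr)
      fix t :: real
      assume "\<not> (u + of_real t * a + (of_real t)^2 * 0 \<noteq> 0 \<or> v + of_real t * b + (of_real t)^2 * 0 \<noteq> 0)"
      then have e: "u + of_real t * a = 0" "v + of_real t * b = 0" by auto
      have "t \<noteq> 0" using e uv(1) by auto
      then have "a = (- 1 / of_real t) * u \<and> b = (- 1 / of_real t) * v"
        using e by (auto simp: field_simps add_eq_0_iff)
      then show False using False by blast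
    qed
    from poly_curve[OF this] show ?thesis using uv V' by simp
  next
    case True
    then obtain \<mu> where mu: "a = \<mu> * u" "b = \<mu> * v" by blast
    define s where "s = (if Im \<mu> = 0 then \<i> else 0)"
    have "\<And>t::real. u + of_real t * a + (of_real t)^2 * (s * u) \<noteq> 0 \<or> v + of_real t * b + (of_real t)^2 * (s * v) \<noteq> 0"
    proof (rule ccontr)
      fix t :: real
      assume "\<not> (u + of_real t * a + (of_real t)^2 * (s * u) \<noteq> 0 \<or> v + of_real t * b + (of_real t)^2 * (s * v) \<noteq> 0)"
      then have e: "(1 + of_real t * \<mu> + (of_real t)^2 * s) * u = 0" "(1 + of_real t * \<mu> + (of_real t)^2 * s) * v = 0"
        by (auto simp: mu algebra_simps)
      then have z: "1 + of_real t * \<mu> + (of_real t)^2 * s = 0" using uv(1) by auto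
      show False
      proof (cases "Im \<mu> = 0")
        case True
        then have "Im (1 + of_real t * \<mu> + (of_real t)^2 * s) = t^2" by (simp add: s_def)
        then have "t = 0" using z by simp
        then show False using z by simp
      next
        case False
        then have "Im (1 + of_real t * \<mu> + (of_real t)^2 * s) = t * Im \<mu>" by (simp add: s_def)
        then have "t = 0" using z False by simp
        then show False using z by simp
      qed
    qed
    from poly_curve[OF this] show ?thesis using uv V' by simp
  qed
qed

lemma tderiv_eqI:
  assumes X: "X \<in> nilorb" and V: "V \<in> tang X" and H: "(H has_derivative H') (at X)"
    and hH: "\<And>p. p \<in> nilorb \<Longrightarrow> h p = H p"
  shows "tderiv h X V = H' V"
proof -
  have blin: "bounded_linear H'" using H by (rule has_derivative_bounded_linear)
  have good: "((h \<circ> \<gamma>) has_real_derivative H' V) (at 0)"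
    if g: "range \<gamma> \<subseteq> nilorb" "\<gamma> 0 = X" "(\<gamma> has_vector_derivative V) (at 0)" for \<gamma>
  proof -
    have "h \<circ> \<gamma> = H \<circ> \<gamma>" using g(1) hH by (auto simp: fun_eq_iff)
    have d1: "(\<gamma> has_derivative (\<lambda>t. t *\<^sub>R V)) (at 0)" using g(3) by (simp add: has_vector_derivative_def)
    have d2: "(H has_derivative H') (at (\<gamma> 0))" using H g(2) by simp
    have "((H \<circ> \<gamma>) has_derivative (H' \<circ> (\<lambda>t. t *\<^sub>R V))) (at 0)" by (rule diff_chain_at[OF d1 d2])
    moreover have "H' \<circ> (\<lambda>t. t *\<^sub>R V) = (*) (H' V)"
      using linear_cmul[OF bounded_linear.linear[OF blin]] by (auto simp: fun_eq_iff)
    ultimately show ?thesis using \<open>h \<circ> \<gamma> = H \<circ> \<gamma>\<close> by (simp add: has_field_derivative_def)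
  qed
  obtain \<gamma>0 where g0: "range \<gamma>0 \<subseteq> nilorb" "\<gamma>0 0 = X" "(\<gamma>0 has_vector_derivative V) (at 0)"
    using curve_exists[OF X V] by blast
  show ?thesis unfolding tderiv_def
  proof (rule the_equality)
    show "\<forall>\<gamma>. range \<gamma> \<subseteq> nilorb \<and> \<gamma> 0 = X \<and> (\<gamma> has_vector_derivative V) (at 0) \<longrightarrow>
          ((h \<circ> \<gamma>) has_real_derivative H' V) (at 0)" using good by blast
  next
    fix w assume "\<forall>\<gamma>. range \<gamma> \<subseteq> nilorb \<and> \<gamma> 0 = X \<and> (\<gamma> has_vector_derivative V) (at 0) \<longrightarrow>
          ((h \<circ> \<gamma>) has_real_derivative w) (at 0)"
    then have "((h \<circ> \<gamma>0) has_real_derivative w) (at 0)" using g0 by blast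
    moreover have "((h \<circ> \<gamma>0) has_real_derivative H' V) (at 0)" using good g0 by blast
    ultimately show "w = H' V" by (rule DERIV_unique)
  qed
qed


lemma bl_commut: "bounded_linear (\<lambda>q. commut B q)"
  unfolding linear_conv_bounded_linear[symmetric]
  by (rule linearI) (simp_all add: commut_add_right commut_scaleR_right)

lemma bl_cmul_commut: "bounded_linear (\<lambda>q. cmul a (commut B q))"
  unfolding linear_conv_bounded_linear[symmetric]
  by (rule linearI) (simp_all add: commut_add_right commut_scaleR_right cmul_add cmul_scaleR)

lemma bl_retr: "bounded_linear (\<lambda>q::mat2. Re (\<mu> * trace (B ** q)))"
  unfolding linear_conv_bounded_linear[symmetric]
  by (rule linearI) (simp_all add: trace2 algebra_simps)

lemma trace_comm: "trace ((A::mat2) ** B) = trace (B ** A)"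
  by (simp add: trace2 algebra_simps)

lemma ext_d_fund:
  assumes X: "X \<in> nilorb" and A: "A \<in> sl2" and B: "B \<in> sl2"
    and F: "\<And>C p. C \<in> sl2 \<Longrightarrow> p \<in> nilorb \<Longrightarrow> \<alpha> p (commut C p) = F C p"
    and FA: "(F A has_derivative FA') (at X)" and FB: "(F B has_derivative FB') (at X)"
  shows "ext_d \<alpha> (xi A) (xi B) X = FB' (commut A X) - FA' (commut B X) - F (commut B A) X"
proof -
  have t1: "tderiv (\<lambda>p. \<alpha> p (xi B p)) X (xi A X) = FB' (commut A X)"
    using tderiv_eqI[OF X xi_tang[OF A] FB] F[OF B] by (simp add: xi_def)
  have t2: "tderiv (\<lambda>p. \<alpha> p (xi A p)) X (xi B X) = FA' (commut B X)"
    using tderiv_eqI[OF X xi_tang[OF B] FA] F[OF A] by (simp add: xi_def)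
  have fd: "frechet_derivative (xi C) (at X) = xi C" for C
  proof -
    have "(xi C has_derivative xi C) (at X)"
      using bounded_linear.has_derivative[OF bl_commut[of C], OF has_derivative_ident]
      by (simp add: xi_def[abs_def])
    then show ?thesis by (metis frechet_derivative_at)
  qed
  have lb: "lie_bracket (xi A) (xi B) X = commut (commut B A) X"
    unfolding lie_bracket_def fd by (simp add: xi_def jacobi)
  show ?thesis unfolding ext_d_def t1 t2 lb using F[OF commut_sl2 X] by simp
qed

lemma aux_field: "S > 0 \<Longrightarrow> (s::real) > 0 \<Longrightarrow> (inverse S / 2 * K * s - 1 * S) / (s ^ Suc (Suc 0)) = K / (2 * s * S) - S / s\<^sup>2"
  by (simp add: field_simps power2_eq_square)

locale hk =
  fixes k c :: real and f :: "real \<Rightarrow> real" and \<rho> :: "mat2 \<Rightarrow> real"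
  assumes kpos: "k > 0" and cnn: "c \<ge> 0"
    and fder: "\<And>s. s > 0 \<Longrightarrow> (f has_real_derivative (sqrt (k\<^sup>2 * s + c) / s)) (at s)"
    and rho: "\<And>X. X \<in> nilorb \<Longrightarrow> \<rho> X = f (eta k X)"
begin

definition dd :: "real \<Rightarrow> real" where "dd s = sqrt (k\<^sup>2 * s + c) / s"
definition dd' :: "real \<Rightarrow> real" where
  "dd' s = k\<^sup>2 / (2 * s * sqrt (k\<^sup>2 * s + c)) - sqrt (k\<^sup>2 * s + c) / s\<^sup>2"

lemma sq_pos: "s > 0 \<Longrightarrow> sqrt (k\<^sup>2 * s + c) > 0"
  using kpos cnn by (simp add: add_pos_nonneg)

lemma dd_pos: "s > 0 \<Longrightarrow> dd s > 0"
  using sq_pos by (simp add: dd_def)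

lemma dd_deriv: assumes "s > 0" shows "(dd has_real_derivative dd' s) (at s)"
proof -
  have p: "k\<^sup>2 * s + c > 0" using kpos cnn assms by (simp add: add_pos_nonneg)
  have g: "((\<lambda>s. k\<^sup>2 * s + c) has_real_derivative k\<^sup>2) (at s)"
    by (auto intro!: derivative_eq_intros)
  have sq: "((\<lambda>s. sqrt (k\<^sup>2 * s + c)) has_real_derivative (inverse (sqrt (k\<^sup>2 * s + c)) / 2 * k\<^sup>2)) (at s)"
    by (rule DERIV_chain2[OF DERIV_real_sqrt[OF p] g])
  show ?thesis unfolding dd_def[abs_def]
    apply (rule DERIV_cong[OF DERIV_quotient[OF sq DERIV_ident]])
    using assms apply simp
    unfolding dd'_def by (rule aux_field[OF sq_pos[OF assms] assms])

qed

lemma dd_key: assumes "s > 0" shows "dd s + s * dd' s = k\<^sup>2 / (2 * sqrt (k\<^sup>2 * s + c))"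
  using sq_pos[OF assms] assms by (simp add: dd_def dd'_def field_simps power2_eq_square)

lemma nil_pos: "X \<in> nilorb \<Longrightarrow> inner X X > 0"
  by (auto simp: nilorb_def)

lemma eta_pos: "X \<in> nilorb \<Longrightarrow> eta k X > 0"
  using nil_pos kpos by (simp add: eta_inner)

lemma eta_der: "((\<lambda>q. 4 * k\<^sup>2 * inner q q) has_derivative (\<lambda>W. 8 * k\<^sup>2 * inner X W)) (at X)"
  apply (rule has_derivative_eq_rhs)
   apply (rule derivative_intros has_derivative_ident)+
  by (auto simp: fun_eq_iff inner_commute algebra_simps)

lemma rho_tderiv: assumes X: "X \<in> nilorb" and V: "V \<in> tang X"
  shows "tderiv \<rho> X V = dd (eta k X) * (8 * k\<^sup>2 * inner X V)"
proof -
  have fd0: "(f has_derivative (*) (dd (eta k X))) (at (eta k X))"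
    using fder[OF eta_pos[OF X]] by (simp add: has_field_derivative_def dd_def)
  have fd: "(f has_derivative (*) (dd (eta k X))) (at (4 * k\<^sup>2 * inner X X))"
    using fd0 by (simp add: eta_inner)
  have H: "((\<lambda>q. f (4 * k\<^sup>2 * inner q q)) has_derivative (\<lambda>W. dd (eta k X) * (8 * k\<^sup>2 * inner X W))) (at X)"
    using has_derivative_compose[OF eta_der fd] .
  show ?thesis by (rule tderiv_eqI[OF X V H]) (simp add: rho eta_inner)
qed

definition FI :: "mat2 \<Rightarrow> mat2 \<Rightarrow> real" where
  "FI B q = - (dd (4 * k\<^sup>2 * inner q q) * (8 * k\<^sup>2 * inner q (cmul \<i> (commut B q))))"
definition FI' :: "mat2 \<Rightarrow> mat2 \<Rightarrow> mat2 \<Rightarrow> real" where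
  "FI' B X W = - (dd (4 * k\<^sup>2 * inner X X) * (8 * k\<^sup>2 * (inner X (cmul \<i> (commut B W)) + inner W (cmul \<i> (commut B X))))
            + dd' (4 * k\<^sup>2 * inner X X) * (8 * k\<^sup>2 * inner X W) * (8 * k\<^sup>2 * inner X (cmul \<i> (commut B X))))"

lemma FI_deriv: assumes X: "X \<in> nilorb" shows "(FI B has_derivative FI' B X) (at X)"
proof -
  have s: "4 * k\<^sup>2 * inner X X > 0" using eta_pos[OF X] by (simp add: eta_inner)
  have d1: "((\<lambda>q. dd (4 * k\<^sup>2 * inner q q)) has_derivative (\<lambda>W. dd' (4 * k\<^sup>2 * inner X X) * (8 * k\<^sup>2 * inner X W))) (at X)"
    using has_derivative_compose[OF eta_der dd_deriv[OF s, unfolded has_field_derivative_def]] by (simp add: mult.commute)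
  have L: "((\<lambda>q. cmul \<i> (commut B q)) has_derivative (\<lambda>q. cmul \<i> (commut B q))) (at X)"
    using bounded_linear.has_derivative[OF bl_cmul_commut, OF has_derivative_ident] .
  have d2: "((\<lambda>q. inner q (cmul \<i> (commut B q))) has_derivative (\<lambda>W. inner X (cmul \<i> (commut B W)) + inner W (cmul \<i> (commut B X)))) (at X)"
    using has_derivative_inner[OF has_derivative_ident L] .
  note m = has_derivative_mult[OF d1 has_derivative_mult_right[OF d2]]
  note m2 = has_derivative_minus[OF m]
  show ?thesis unfolding FI_def[abs_def] FI'_def[abs_def] using m2 by (simp only: add.commute)
qed

lemma alphaI: assumes "p \<in> nilorb" "C \<in> sl2" shows "Ldrho Iop \<rho> p (commut C p) = FI C p"
proof -
  have eq: "cmul \<i> (commut C p) = commut (cmul \<i> C) p" by (simp add: commut_cmul_left)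
  have tg: "commut (cmul \<i> C) p \<in> tang p" using xi_tang[OF cmul_sl2[OF assms(2)]] by (simp add: xi_def)
  have t: "tderiv \<rho> p (commut (cmul \<i> C) p) = dd (eta k p) * (8 * k\<^sup>2 * inner p (commut (cmul \<i> C) p))"
    by (rule rho_tderiv[OF assms(1) tg])
  have "Ldrho Iop \<rho> p (commut C p) = - tderiv \<rho> p (commut (cmul \<i> C) p)"
    unfolding Ldrho_def Iop_def eq ..
  also have "\<dots> = FI C p"
    unfolding t FI_def eq eta_inner by simp
  finally show ?thesis .
qed

lemma omegaI_alg:
  fixes d d' p1 p2 q xy xiz xz xiy :: real
  shows "- 1/2 * ((- (d * (8 * k\<^sup>2 * (p1 + q)) + d' * (8 * k\<^sup>2 * xy) * (8 * k\<^sup>2 * xiz)))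
     - (- (d * (8 * k\<^sup>2 * (p2 + - q)) + d' * (8 * k\<^sup>2 * xz) * (8 * k\<^sup>2 * xiy)))
     - (- (d * (8 * k\<^sup>2 * (p1 - p2)))))
   = 32 * k^4 * d' * (xy * xiz - xz * xiy) + 8 * k\<^sup>2 * d * q"
  by (simp add: algebra_simps power2_eq_square power4_eq_xxxx)

lemma omegaI_formula:
  assumes X: "X \<in> nilorb" and Y: "Y \<in> tang X" and Z: "Z \<in> tang X"
  shows "omegaI \<rho> X Y Z = 32 * k^4 * dd' (eta k X) * (inner X Y * inner X (cmul \<i> Z) - inner X Z * inner X (cmul \<i> Y))
      + 8 * k\<^sup>2 * dd (eta k X) * inner Y (cmul \<i> Z)" (is "_ = ?rhs")
proof -
  define A where "A = tgen X Y"
  define B where "B = tgen X Z"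
  have A: "A \<in> sl2" "commut A X = Y" using tgen[OF Y] by (simp_all add: A_def xi_def)
  have B: "B \<in> sl2" "commut B X = Z" using tgen[OF Z] by (simp_all add: B_def xi_def)
  have e: "ext_d (Ldrho Iop \<rho>) (xi A) (xi B) X = FI' B X (commut A X) - FI' A X (commut B X) - FI (commut B A) X"
  proof (rule ext_d_fund[OF X A(1) B(1)])
    show "Ldrho Iop \<rho> p (commut C p) = FI C p" if "C \<in> sl2" "p \<in> nilorb" for C p using alphaI[OF that(2) that(1)] .
  qed (rule FI_deriv[OF X])+
  have K1: "inner X (cmul \<i> (commut (commut B A) X)) = inner X (cmul \<i> (commut B Y)) - inner X (cmul \<i> (commut A Z))"
    using A B by (simp add: jacobi cmul_diff inner_diff_right)
  have K2: "inner Z (cmul \<i> Y) = - inner Y (cmul \<i> Z)"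
    using inner_i_right[of Z Y] inner_commute[of "cmul \<i> Z" Y] by linarith
  have "omegaI \<rho> X Y Z = - 1/2 * ext_d (Ldrho Iop \<rho>) (xi A) (xi B) X"
    by (simp add: omegaI_def dform_def A_def B_def)
  also have "\<dots> = ?rhs"
    unfolding e FI'_def FI_def A(2) B(2) K1 K2 eta_inner
    by (rule omegaI_alg)
  finally show ?thesis .
qed

lemma gmet_formula:
  assumes X: "X \<in> nilorb" and Y: "Y \<in> tang X" and Z: "Z \<in> tang X"
  shows "gmet \<rho> X Y Z = 8 * k\<^sup>2 * dd (eta k X) * inner Y Z
     + 32 * k^4 * dd' (eta k X) * (inner X Y * inner X Z + inner X (cmul \<i> Y) * inner X (cmul \<i> Z))"
  unfolding gmet_def Iop_def omegaI_formula[OF X tang_cmul[OF Y] Z]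
  by (simp add: cmul_i_i inner_i_i algebra_simps)

end


lemma trace_omegac: "trace ((X::mat2) ** (A ** B - B ** A)) = - trace ((A ** X - X ** A) ** B)"
  by (simp add: trace2 algebra_simps)

lemma trace_T: "trace (B ** commut A X) - trace (A ** commut B X) - trace (commut B A ** X) = - trace (X ** commut A B)"
  by (simp add: trace2 algebra_simps)

lemma Re_cnj': "Re (cnj z) = Re z" by simp

lemma ReRe: "Re p * Re q + Re (\<i> * p) * Re (\<i> * q) = Re (cnj p * q)"
  by (simp add: algebra_simps)

lemma cnj_mult_self: "cnj z * z = complex_of_real (cmod z ^ 2)"
  unfolding cmod_power2 by (simp add: complex_eq_iff power2_eq_square)

lemma lagrange: "(cmod (cnj u * z1 + cnj v * z2))^2 \<le> (cmod u ^ 2 + cmod v ^ 2) * (cmod z1 ^ 2 + cmod z2 ^ 2)"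
proof -
  have "(cmod u ^ 2 + cmod v ^ 2) * (cmod z1 ^ 2 + cmod z2 ^ 2) - (cmod (cnj u * z1 + cnj v * z2))^2
        = (cmod (u * z2 - v * z1))^2"
    unfolding cmod_power2 by (simp add: power2_eq_square) algebra
  then show ?thesis by (metis diff_ge_0_iff_ge zero_le_power2)
qed

context hk begin

definition omu :: "complex \<Rightarrow> mat2 \<Rightarrow> mat2 \<Rightarrow> mat2 \<Rightarrow> real" where
  "omu \<mu> X Z Y = Re (\<mu> * (of_real (k\<^sup>2) * omegac X Z Y))"

lemma omegaJ_omu: "omegaJ k = omu 1"
  by (simp add: fun_eq_iff omegaJ_def omu_def)

lemma omegaK_omu: "omegaK k = omu (- \<i>)"
  by (simp add: fun_eq_iff omegaK_def omu_def)

lemma omegac_formula: assumes "Y \<in> tang X" "Z \<in> tang X"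
  shows "omegac X Z Y = 4 * trace (Z ** tgen X Y)"
proof -
  have "Z = tgen X Z ** X - X ** tgen X Z" using tgen(2)[OF assms(2)] by (simp add: xi_def commut_def)
  then show ?thesis unfolding omegac_def kill_neg_def commut_def using trace_omegac by simp
qed

definition r2 :: "complex \<Rightarrow> complex \<Rightarrow> real" where "r2 u v = cmod u ^ 2 + cmod v ^ 2"

lemma r2_pos: "u \<noteq> 0 \<or> v \<noteq> 0 \<Longrightarrow> r2 u v > 0"
  by (auto simp: r2_def add_pos_nonneg add_nonneg_pos)

lemma eta_pX: "eta k (pX u v) = 4 * k\<^sup>2 * (r2 u v)\<^sup>2"
  by (simp add: eta_inner inner_pX r2_def)

lemma x_r2: "cnj u * u + cnj v * v = of_real (r2 u v)"
  by (simp add: cnj_mult_self r2_def)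

lemma gmet_x:
  assumes uv: "u \<noteq> 0 \<or> v \<noteq> 0"
  shows "gmet \<rho> (pX u v) (dpX u v z1 z2) (dpX u v w1 w2) =
     (16 * k\<^sup>2 * dd (eta k (pX u v)) * r2 u v) * Re (cnj z1 * w1 + cnj z2 * w2)
   + (16 * k\<^sup>2 * dd (eta k (pX u v)) + 128 * k^4 * dd' (eta k (pX u v)) * (r2 u v)\<^sup>2)
       * Re ((cnj z1 * u + cnj z2 * v) * (cnj u * w1 + cnj v * w2))"
proof -
  define D where "D = dd (eta k (pX u v))"
  define D' where "D' = dd' (eta k (pX u v))"
  define R where "R = r2 u v"
  define p where "p = cnj u * z1 + cnj v * z2"
  define q where "q = cnj u * w1 + cnj v * w2"
  have X: "pX u v \<in> nilorb" using pX_nilorb[OF uv] .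
  have cp: "cnj p = cnj z1 * u + cnj z2 * v" by (simp add: p_def)
  have ip: "cnj u * (\<i> * z1) + cnj v * (\<i> * z2) = \<i> * p" by (simp add: p_def algebra_simps)
  have iq: "cnj u * (\<i> * w1) + cnj v * (\<i> * w2) = \<i> * q" by (simp add: q_def algebra_simps)
  have g: "gmet \<rho> (pX u v) (dpX u v z1 z2) (dpX u v w1 w2) =
     8 * k\<^sup>2 * D * (2 * (R * Re (cnj z1 * w1 + cnj z2 * w2) + Re (cnj p * q)))
     + 32 * k^4 * D' * ((2 * R * Re p) * (2 * R * Re q) + (2 * R * Re (\<i> * p)) * (2 * R * Re (\<i> * q)))"
    unfolding gmet_formula[OF X dpX_tang[OF uv] dpX_tang[OF uv]] cmul_dpX inner_dpX inner_pX_dpX ip iq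
    by (simp add: D_def D'_def R_def r2_def p_def q_def algebra_simps)
  have "(2 * R * Re p) * (2 * R * Re q) + (2 * R * Re (\<i> * p)) * (2 * R * Re (\<i> * q)) = 4 * R\<^sup>2 * Re (cnj p * q)"
    using ReRe[of p q] by (simp add: algebra_simps power2_eq_square)
  then have "gmet \<rho> (pX u v) (dpX u v z1 z2) (dpX u v w1 w2) =
     (16 * k\<^sup>2 * D * R) * Re (cnj z1 * w1 + cnj z2 * w2) + (16 * k\<^sup>2 * D + 128 * k^4 * D' * R\<^sup>2) * Re (cnj p * q)"
    unfolding g by (simp add: algebra_simps)
  then show ?thesis unfolding cp by (simp add: D_def D'_def R_def q_def)
qed


lemma coef_pos:
  assumes uv: "u \<noteq> 0 \<or> v \<noteq> 0"
  shows "16 * k\<^sup>2 * dd (eta k (pX u v)) * r2 u v > 0"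
    "(16 * k\<^sup>2 * dd (eta k (pX u v)) * r2 u v) + (16 * k\<^sup>2 * dd (eta k (pX u v)) + 128 * k^4 * dd' (eta k (pX u v)) * (r2 u v)\<^sup>2) * r2 u v > 0"
    "dd (eta k (pX u v)) + eta k (pX u v) * dd' (eta k (pX u v)) > 0"
proof -
  have X: "pX u v \<in> nilorb" using pX_nilorb[OF uv] .
  have e: "eta k (pX u v) > 0" using eta_pos[OF X] .
  have R: "r2 u v > 0" using r2_pos[OF uv] .
  have k2: "k\<^sup>2 > 0" using kpos by simp
  show "16 * k\<^sup>2 * dd (eta k (pX u v)) * r2 u v > 0" using dd_pos[OF e] R k2 by simp
  have key: "dd (eta k (pX u v)) + eta k (pX u v) * dd' (eta k (pX u v)) > 0"
    using dd_key[OF e] sq_pos[OF e] k2 by simp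
  then show "dd (eta k (pX u v)) + eta k (pX u v) * dd' (eta k (pX u v)) > 0" .
  have "(16 * k\<^sup>2 * dd (eta k (pX u v)) * r2 u v) + (16 * k\<^sup>2 * dd (eta k (pX u v)) + 128 * k^4 * dd' (eta k (pX u v)) * (r2 u v)\<^sup>2) * r2 u v
     = 32 * k\<^sup>2 * r2 u v * (dd (eta k (pX u v)) + eta k (pX u v) * dd' (eta k (pX u v)))"
    unfolding eta_pX[of u v] by (simp add: algebra_simps power2_eq_square power4_eq_xxxx)
  then show "(16 * k\<^sup>2 * dd (eta k (pX u v)) * r2 u v) + (16 * k\<^sup>2 * dd (eta k (pX u v)) + 128 * k^4 * dd' (eta k (pX u v)) * (r2 u v)\<^sup>2) * r2 u v > 0"
    using key R k2 by simp
qed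

lemma gmet_pos:
  assumes X: "X \<in> nilorb" and Dt: "D \<in> tang X" and g0: "gmet \<rho> X D D = 0" shows "D = 0"
proof -
  obtain u v where uv: "u \<noteq> 0 \<or> v \<noteq> 0" "X = pX u v" using nilorb_pX[OF X] by blast
  obtain A where "A \<in> sl2" "D = dpX u v (A$1$1 * u + A$1$2 * v) (A$2$1 * u + A$2$2 * v)"
    using tang_pX[of D u v] Dt uv by blast
  then obtain z1 z2 where Dz: "D = dpX u v z1 z2" by blast
  define PP where "PP = 16 * k\<^sup>2 * dd (eta k (pX u v)) * r2 u v"
  define BB where "BB = 16 * k\<^sup>2 * dd (eta k (pX u v)) + 128 * k^4 * dd' (eta k (pX u v)) * (r2 u v)\<^sup>2"
  define S where "S = cmod z1 ^ 2 + cmod z2 ^ 2"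
  define p where "p = cnj u * z1 + cnj v * z2"
  have Sre: "Re (cnj z1 * z1 + cnj z2 * z2) = S" by (simp add: S_def cnj_mult_self)
  have cp: "cnj z1 * u + cnj z2 * v = cnj p" by (simp add: p_def)
  have pre: "Re ((cnj z1 * u + cnj z2 * v) * (cnj u * z1 + cnj v * z2)) = cmod p ^ 2"
    unfolding cp p_def[symmetric] cnj_mult_self by simp
  have g: "gmet \<rho> X D D = PP * S + BB * cmod p ^ 2"
    using gmet_x[OF uv(1), of z1 z2 z1 z2] uv(2) Dz Sre pre by (simp add: PP_def BB_def)
  have cs: "cmod p ^ 2 \<le> r2 u v * S" using lagrange[of u z1 v z2] by (simp add: p_def r2_def S_def)
  have P: "PP > 0" "PP + BB * r2 u v > 0" using coef_pos[OF uv(1)] by (simp_all add: PP_def BB_def)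
  have S0: "S \<ge> 0" by (simp add: S_def)
  have "S = 0"
  proof (rule ccontr)
    assume "S \<noteq> 0" then have Sp: "S > 0" using S0 by simp
    have "PP * S + BB * cmod p ^ 2 > 0"
    proof (cases "BB \<ge> 0")
      case True
      then have "BB * cmod p ^ 2 \<ge> 0" by simp
      moreover have "PP * S > 0" using P Sp by simp
      ultimately show ?thesis by linarith
    next
      case False
      then have "BB * cmod p ^ 2 \<ge> BB * (r2 u v * S)" using cs by (simp add: mult_le_cancel_left)
      moreover have "(PP + BB * r2 u v) * S > 0" using P Sp by simp
      ultimately show ?thesis by (simp add: algebra_simps)
    qed
    then show False using g g0 by simp
  qed
  then have "z1 = 0" "z2 = 0" by (simp_all add: S_def add_nonneg_eq_0_iff)
  then show ?thesis using Dz by (simp add: dpX_def mat2_eq_iff)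
qed

lemma gmet_diff:
  assumes X: "X \<in> nilorb" and "Z \<in> tang X" "W1 \<in> tang X" "W2 \<in> tang X"
  shows "gmet \<rho> X Z (W1 - W2) = gmet \<rho> X Z W1 - gmet \<rho> X Z W2"
  unfolding gmet_formula[OF X assms(2) tang_sub[OF assms(3,4)]] gmet_formula[OF X assms(2) assms(3)]
    gmet_formula[OF X assms(2) assms(4)]
  by (simp add: inner_diff_right cmul_diff algebra_simps)

lemma Lop_exists:
  assumes X: "X \<in> nilorb" and Y: "Y \<in> tang X"
  shows "\<exists>W. W \<in> tang X \<and> (\<forall>Z\<in>tang X. gmet \<rho> X Z W = omu \<mu> X Z Y)"
proof -
  obtain u v where uv: "u \<noteq> 0 \<or> v \<noteq> 0" "X = pX u v" using nilorb_pX[OF X] by blast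
  define A where "A = tgen X Y"
  have A: "A \<in> sl2" using tgen[OF Y] by (simp add: A_def)
  define \<xi>1 where "\<xi>1 = A$1$1 * u + A$1$2 * v"
  define \<xi>2 where "\<xi>2 = A$2$1 * u + A$2$2 * v"
  define PP where "PP = 16 * k\<^sup>2 * dd (eta k (pX u v)) * r2 u v"
  define BB where "BB = 16 * k\<^sup>2 * dd (eta k (pX u v)) + 128 * k^4 * dd' (eta k (pX u v)) * (r2 u v)\<^sup>2"
  define R where "R = r2 u v"
  have P: "PP > 0" "PP + BB * R > 0" using coef_pos[OF uv(1)] by (simp_all add: PP_def BB_def R_def)
  define n1 where "n1 = - cnj (of_real (8 * k\<^sup>2) * \<mu> * \<xi>2)"
  define n2 where "n2 = cnj (of_real (8 * k\<^sup>2) * \<mu> * \<xi>1)"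
  define xn where "xn = cnj u * n1 + cnj v * n2"
  define cc where "cc = BB / (PP + BB * R)"
  define w1 where "w1 = (n1 - of_real cc * u * xn) / of_real PP"
  define w2 where "w2 = (n2 - of_real cc * v * xn) / of_real PP"
  have PPc: "(of_real PP :: complex) \<noteq> 0" using P by simp
  have Sc: "(of_real (PP + BB * R) :: complex) \<noteq> 0" using P by (simp del: of_real_add)
  have xw0: "cnj u * w1 + cnj v * w2 = (xn - of_real cc * (cnj u * u + cnj v * v) * xn) / of_real PP"
    using PPc by (simp add: w1_def w2_def xn_def field_simps)
  have xw: "cnj u * w1 + cnj v * w2 = xn / of_real (PP + BB * R)"
  proof -
    have "(xn - of_real cc * of_real R * xn) / of_real PP = xn / of_real (PP + BB * R)"
      using P by (simp add: cc_def field_simps del: of_real_add) (simp add: algebra_simps)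
    then show ?thesis using xw0 x_r2[of u v] by (simp add: R_def)
  qed
  have E: "of_real PP * w1 + of_real BB * u * (cnj u * w1 + cnj v * w2) = n1"
          "of_real PP * w2 + of_real BB * v * (cnj u * w1 + cnj v * w2) = n2"
    unfolding xw using P PPc Sc by (simp_all add: w1_def w2_def cc_def field_simps del: of_real_add)
  define W where "W = dpX u v w1 w2"
  have Wt: "W \<in> tang X" using dpX_tang[OF uv(1)] uv(2) by (simp add: W_def)
  have "gmet \<rho> X Z W = omu \<mu> X Z Y" if Z: "Z \<in> tang X" for Z
  proof -
    obtain B where "B \<in> sl2" "Z = dpX u v (B$1$1 * u + B$1$2 * v) (B$2$1 * u + B$2$2 * v)"
      using tang_pX[of Z u v] Z uv by blast
    then obtain z1 z2 where Zz: "Z = dpX u v z1 z2" by blast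
    have "gmet \<rho> X Z W = PP * Re (cnj z1 * w1 + cnj z2 * w2) + BB * Re ((cnj z1 * u + cnj z2 * v) * (cnj u * w1 + cnj v * w2))"
      using gmet_x[OF uv(1), of z1 z2 w1 w2] uv(2) Zz by (simp add: W_def PP_def BB_def)
    also have "\<dots> = Re (cnj z1 * (of_real PP * w1 + of_real BB * u * (cnj u * w1 + cnj v * w2))
                     + cnj z2 * (of_real PP * w2 + of_real BB * v * (cnj u * w1 + cnj v * w2)))"
      by (simp add: algebra_simps)
    also have "\<dots> = Re (cnj z1 * n1 + cnj z2 * n2)" unfolding E ..
    also have "\<dots> = Re (of_real (8 * k\<^sup>2) * \<mu> * (z2 * \<xi>1 - z1 * \<xi>2))"
    proof -
      have "cnj z1 * n1 + cnj z2 * n2 = cnj (of_real (8 * k\<^sup>2) * \<mu> * (z2 * \<xi>1 - z1 * \<xi>2))"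
        by (simp add: n1_def n2_def algebra_simps)
      then show ?thesis by (simp only: Re_cnj')
    qed
    also have "\<dots> = omu \<mu> X Z Y"
      unfolding omu_def omegac_formula[OF Y Z] A_def[symmetric] unfolding Zz trace_dpX_A[OF A]
      by (simp add: \<xi>1_def \<xi>2_def algebra_simps)
    finally show ?thesis .
  qed
  then show ?thesis using Wt by blast
qed

lemma Lop_spec:
  assumes X: "X \<in> nilorb" and Y: "Y \<in> tang X"
  shows "Lop (omu \<mu>) \<rho> X Y \<in> tang X \<and> (\<forall>Z\<in>tang X. gmet \<rho> X Z (Lop (omu \<mu>) \<rho> X Y) = omu \<mu> X Z Y)"
proof -
  have "\<exists>!W. W \<in> tang X \<and> (\<forall>Z\<in>tang X. gmet \<rho> X Z W = omu \<mu> X Z Y)"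
  proof (rule ex_ex1I)
    show "\<exists>W. W \<in> tang X \<and> (\<forall>Z\<in>tang X. gmet \<rho> X Z W = omu \<mu> X Z Y)" by (rule Lop_exists[OF X Y])
  next
    fix W1 W2 assume 1: "W1 \<in> tang X \<and> (\<forall>Z\<in>tang X. gmet \<rho> X Z W1 = omu \<mu> X Z Y)"
      and 2: "W2 \<in> tang X \<and> (\<forall>Z\<in>tang X. gmet \<rho> X Z W2 = omu \<mu> X Z Y)"
    have Dt: "W1 - W2 \<in> tang X" using 1 2 tang_sub by blast
    have "gmet \<rho> X (W1 - W2) (W1 - W2) = 0"
      using gmet_diff[OF X Dt] 1 2 Dt by simp
    then have "W1 - W2 = 0" by (rule gmet_pos[OF X Dt])
    then show "W1 = W2" by simp
  qed
  then show ?thesis unfolding Lop_def by (rule theI')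
qed

end


lemma solve_lin: "(K::real) > 0 \<Longrightarrow> a > 0 \<Longrightarrow> 8 * K * a * w = 4 * K * r \<Longrightarrow> w = r / (2 * a)"
  by (simp add: field_simps)

context hk begin

lemma Lop_inner:
  assumes X: "X \<in> nilorb" and B: "B \<in> sl2"
  shows "inner X (Lop (omu \<mu>) \<rho> X (commut B X)) = Re (\<mu> * trace (B ** X)) / (2 * (dd (eta k X) + eta k X * dd' (eta k X)))"
proof -
  define Y where "Y = commut B X"
  have Y: "Y \<in> tang X" using xi_tang[OF B] by (simp add: Y_def xi_def)
  define W where "W = Lop (omu \<mu>) \<rho> X Y"
  have W: "W \<in> tang X" "\<forall>Z\<in>tang X. gmet \<rho> X Z W = omu \<mu> X Z Y" using Lop_spec[OF X Y] by (simp_all add: W_def)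
  obtain u v where uv: "u \<noteq> 0 \<or> v \<noteq> 0" "X = pX u v" using nilorb_pX[OF X] by blast
  have Xt: "X \<in> tang X" using pX_tang[OF uv(1)] uv(2) by simp
  have g: "gmet \<rho> X X W = 8 * k\<^sup>2 * (dd (eta k X) + eta k X * dd' (eta k X)) * inner X W"
    unfolding gmet_formula[OF X Xt W(1)] inner_i_self eta_inner by (simp add: algebra_simps power2_eq_square power4_eq_xxxx)
  have tr: "trace (X ** tgen X Y) = trace (B ** X)"
  proof -
    have 1: "trace (X ** tgen X Y) = trace (tgen X Y ** X)" by (rule trace_comm)
    have "xi (tgen X Y) X = xi B X" using tgen(2)[OF Y] by (simp add: Y_def xi_def)
    then have "trace (tgen X Y ** X) = trace (B ** X)" by (rule trace_stab[OF X tgen(1)[OF Y] B])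
    then show ?thesis using 1 by simp
  qed
  have o: "omu \<mu> X X Y = 4 * k\<^sup>2 * Re (\<mu> * trace (B ** X))"
    unfolding omu_def omegac_formula[OF Y Xt] tr by (simp add: algebra_simps)
  have pos: "dd (eta k X) + eta k X * dd' (eta k X) > 0" using coef_pos(3)[OF uv(1)] uv(2) by simp
  have "8 * k\<^sup>2 * (dd (eta k X) + eta k X * dd' (eta k X)) * inner X W = 4 * k\<^sup>2 * Re (\<mu> * trace (B ** X))"
  proof -
    have "gmet \<rho> X X W = omu \<mu> X X Y" using W(2) Xt by blast
    then show ?thesis unfolding g o .
  qed
  from solve_lin[OF _ pos this] kpos show ?thesis by (simp add: W_def Y_def)
qed

definition psi :: "real \<Rightarrow> real" where "psi s = - (8 * (k\<^sup>2 * s + c) / s)"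
definition psi' :: "real \<Rightarrow> real" where "psi' s = 8 * c / s\<^sup>2"

lemma dd_ratio: assumes s: "s > 0" shows "dd s * (8 * k\<^sup>2) / (2 * (dd s + s * dd' s)) = 8 * (k\<^sup>2 * s + c) / s"
proof -
  define S where "S = sqrt (k\<^sup>2 * s + c)"
  have Sp: "S > 0" using sq_pos[OF s] by (simp add: S_def)
  have nn: "k\<^sup>2 * s + c \<ge> 0" using cnn s by simp
  have S2: "S * S = k\<^sup>2 * s + c" unfolding S_def real_sqrt_mult_self using nn by simp
  have k2: "k\<^sup>2 > 0" using kpos by simp
  have "dd s * (8 * k\<^sup>2) / (2 * (dd s + s * dd' s)) = (S / s) * (8 * k\<^sup>2) / (2 * (k\<^sup>2 / (2 * S)))"
    unfolding dd_key[OF s] by (simp add: dd_def S_def)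
  also have "\<dots> = 8 * (S * S) / s" using Sp s k2 by (simp add: field_simps)
  finally show ?thesis unfolding S2 .
qed

definition FJ :: "complex \<Rightarrow> mat2 \<Rightarrow> mat2 \<Rightarrow> real" where
  "FJ \<mu> C q = psi (4 * k\<^sup>2 * inner q q) * Re (\<mu> * trace (C ** q))"
definition FJ' :: "complex \<Rightarrow> mat2 \<Rightarrow> mat2 \<Rightarrow> mat2 \<Rightarrow> real" where
  "FJ' \<mu> C X W = psi (4 * k\<^sup>2 * inner X X) * Re (\<mu> * trace (C ** W))
     + psi' (4 * k\<^sup>2 * inner X X) * (8 * k\<^sup>2 * inner X W) * Re (\<mu> * trace (C ** X))"

lemma alphaJ: assumes p: "p \<in> nilorb" and C: "C \<in> sl2"
  shows "Ldrho (Lop (omu \<mu>) \<rho>) \<rho> p (commut C p) = FJ \<mu> C p"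
proof -
  have Y: "commut C p \<in> tang p" using xi_tang[OF C] by (simp add: xi_def)
  have Wt: "Lop (omu \<mu>) \<rho> p (commut C p) \<in> tang p" using Lop_spec[OF p Y] by simp
  have e: "eta k p > 0" using eta_pos[OF p] .
  have "Ldrho (Lop (omu \<mu>) \<rho>) \<rho> p (commut C p) = - (dd (eta k p) * (8 * k\<^sup>2 * inner p (Lop (omu \<mu>) \<rho> p (commut C p))))"
    unfolding Ldrho_def rho_tderiv[OF p Wt] ..
  also have "\<dots> = - (dd (eta k p) * (8 * k\<^sup>2) / (2 * (dd (eta k p) + eta k p * dd' (eta k p)))) * Re (\<mu> * trace (C ** p))"
    unfolding Lop_inner[OF p C] by (simp add: algebra_simps)
  also have "\<dots> = psi (eta k p) * Re (\<mu> * trace (C ** p))"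
    unfolding dd_ratio[OF e] psi_def by simp
  finally show ?thesis by (simp add: FJ_def eta_inner)
qed

lemma psi_deriv: assumes s: "s > 0" shows "(psi has_real_derivative psi' s) (at s)"
proof -
  have g: "((\<lambda>s. 8 * (k\<^sup>2 * s + c)) has_real_derivative 8 * k\<^sup>2) (at s)"
    by (auto intro!: derivative_eq_intros)
  have q: "((\<lambda>s. 8 * (k\<^sup>2 * s + c) / s) has_real_derivative
      (8 * k\<^sup>2 * s - 1 * (8 * (k\<^sup>2 * s + c))) / (s ^ Suc (Suc 0))) (at s)"
    using DERIV_quotient[OF g DERIV_ident] s by simp
  have "- ((8 * k\<^sup>2 * s - 1 * (8 * (k\<^sup>2 * s + c))) / (s ^ Suc (Suc 0))) = psi' s"
    unfolding psi'_def using s by (simp add: field_simps power2_eq_square)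
  then show ?thesis using DERIV_minus[OF q] unfolding psi_def[abs_def] by simp
qed

lemma FJ_deriv: assumes X: "X \<in> nilorb" shows "(FJ \<mu> C has_derivative FJ' \<mu> C X) (at X)"
proof -
  have s: "4 * k\<^sup>2 * inner X X > 0" using eta_pos[OF X] by (simp add: eta_inner)
  have d1: "((\<lambda>q. psi (4 * k\<^sup>2 * inner q q)) has_derivative (\<lambda>W. psi' (4 * k\<^sup>2 * inner X X) * (8 * k\<^sup>2 * inner X W))) (at X)"
    using has_derivative_compose[OF eta_der psi_deriv[OF s, unfolded has_field_derivative_def]] by (simp add: mult.commute)
  have L: "((\<lambda>q. Re (\<mu> * trace (C ** q))) has_derivative (\<lambda>q. Re (\<mu> * trace (C ** q)))) (at X)"
    using bounded_linear.has_derivative[OF bl_retr, OF has_derivative_ident] .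
  note m = has_derivative_mult[OF d1 L]
  show ?thesis unfolding FJ_def[abs_def] FJ'_def[abs_def] using m by (simp only: add.commute)
qed

lemma kahlerJ_formula:
  assumes X: "X \<in> nilorb" and Y: "Y \<in> tang X" and Z: "Z \<in> tang X"
  shows "- 1/2 * dform (Ldrho (Lop (omu \<mu>) \<rho>) \<rho>) X Y Z = omu \<mu> X Y Z + c / eta k X * Re (\<mu> * omegac X Y Z)
     - 4 * k\<^sup>2 * psi' (eta k X) * (inner X Y * Re (\<mu> * trace (tgen X Z ** X)) - inner X Z * Re (\<mu> * trace (tgen X Y ** X)))"
proof -
  define A where "A = tgen X Y"
  define B where "B = tgen X Z"
  have A: "A \<in> sl2" "commut A X = Y" using tgen[OF Y] by (simp_all add: A_def xi_def)
  have B: "B \<in> sl2" "commut B X = Z" using tgen[OF Z] by (simp_all add: B_def xi_def)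
  have e: "ext_d (Ldrho (Lop (omu \<mu>) \<rho>) \<rho>) (xi A) (xi B) X = FJ' \<mu> B X (commut A X) - FJ' \<mu> A X (commut B X) - FJ \<mu> (commut B A) X"
  proof (rule ext_d_fund[OF X A(1) B(1)])
    show "Ldrho (Lop (omu \<mu>) \<rho>) \<rho> p (commut C p) = FJ \<mu> C p" if "C \<in> sl2" "p \<in> nilorb" for C p
      using alphaJ[OF that(2) that(1)] .
  qed (rule FJ_deriv[OF X])+
  define t1 where "t1 = trace (B ** Y)"
  define t2 where "t2 = trace (A ** Z)"
  define t3 where "t3 = trace (commut B A ** X)"
  define t4 where "t4 = trace (X ** commut A B)"
  have h: "t1 - t2 - t3 = - t4" using trace_T[of B A X] A(2) B(2) by (simp add: t1_def t2_def t3_def t4_def)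
  have tT: "t3 = t1 - t2 + t4" using h by algebra
  have re3: "Re (\<mu> * t3) = Re (\<mu> * t1) - Re (\<mu> * t2) + Re (\<mu> * t4)" unfolding tT by (simp add: algebra_simps)
  have om: "omegac X Y Z = -4 * t4" by (simp add: omegac_def kill_neg_def A_def B_def t4_def)
  have omr: "Re (\<mu> * omegac X Y Z) = -4 * Re (\<mu> * t4)" unfolding om by (simp add: algebra_simps)
  have omu: "omu \<mu> X Y Z = k\<^sup>2 * Re (\<mu> * omegac X Y Z)" unfolding omu_def by (simp add: algebra_simps)
  have ep: "eta k X > 0" using eta_pos[OF X] .
  have "- 1/2 * dform (Ldrho (Lop (omu \<mu>) \<rho>) \<rho>) X Y Z = - 1/2 * ext_d (Ldrho (Lop (omu \<mu>) \<rho>) \<rho>) (xi A) (xi B) X"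
    by (simp add: dform_def A_def B_def)
  also have "\<dots> = - 1/2 * (psi (eta k X) * Re (\<mu> * t1) + psi' (eta k X) * (8 * k\<^sup>2 * inner X Y) * Re (\<mu> * trace (B ** X))
       - (psi (eta k X) * Re (\<mu> * t2) + psi' (eta k X) * (8 * k\<^sup>2 * inner X Z) * Re (\<mu> * trace (A ** X)))
       - psi (eta k X) * Re (\<mu> * t3))"
    unfolding e FJ'_def FJ_def A(2) B(2) eta_inner t1_def t2_def t3_def ..
  also have "\<dots> = psi (eta k X) / 2 * Re (\<mu> * t4) - 4 * k\<^sup>2 * psi' (eta k X) * (inner X Y * Re (\<mu> * trace (B ** X)) - inner X Z * Re (\<mu> * trace (A ** X)))"
    unfolding re3 by (simp add: algebra_simps)
  also have "\<dots> = omu \<mu> X Y Z + c / eta k X * Re (\<mu> * omegac X Y Z)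
     - 4 * k\<^sup>2 * psi' (eta k X) * (inner X Y * Re (\<mu> * trace (B ** X)) - inner X Z * Re (\<mu> * trace (A ** X)))"
    unfolding omu omr psi_def using ep by (simp add: field_simps)
  finally show ?thesis by (simp add: A_def B_def)
qed

end


context hk begin

lemma kahler_c0: assumes "c = 0" shows "kahler_pot_for (omu \<mu>) (Lop (omu \<mu>) \<rho>) \<rho>"
  unfolding kahler_pot_for_def
proof (intro ballI)
  fix X Y Z assume X: "X \<in> nilorb" and Y: "Y \<in> tang X" and Z: "Z \<in> tang X"
  show "omu \<mu> X Y Z = - 1/2 * dform (Ldrho (Lop (omu \<mu>) \<rho>) \<rho>) X Y Z"
    unfolding kahlerJ_formula[OF X Y Z] psi'_def using assms by simp
qed

lemma not_kahler: assumes cp: "c > 0" shows "\<not> kahler_pot_for (omu 1) (Lop (omu 1) \<rho>) \<rho>"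
proof
  assume H: "kahler_pot_for (omu 1) (Lop (omu 1) \<rho>) \<rho>"
  define X where "X = pX 1 0"
  define A where "A = mk \<i> 0 0 (-\<i>)"
  define B where "B = mk 0 0 \<i> 0"
  define Y where "Y = commut A X"
  define Z where "Z = commut B X"
  have Xn: "X \<in> nilorb" using pX_nilorb[of 1 0] by (simp add: X_def)
  have Yt: "Y \<in> tang X" using xi_tang[of A X] by (simp add: Y_def xi_def A_def sl2_iff)
  have Zt: "Z \<in> tang X" using xi_tang[of B X] by (simp add: Z_def xi_def B_def sl2_iff)
  have xy: "inner X Y = 0" by (simp add: X_def Y_def A_def pX_def inner_mat2 inner_complex_def)
  have xz: "inner X Z = 0" by (simp add: X_def Z_def B_def pX_def inner_mat2 inner_complex_def)
  define B' where "B' = tgen X Z"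
  have B': "B' \<in> sl2" "commut B' X = Z" using tgen[OF Zt] by (simp_all add: B'_def xi_def)
  have b21: "B'$2$1 = \<i>"
    using arg_cong[OF B'(2), of "\<lambda>M. M$1$1"] by (simp add: X_def Z_def B_def pX_def)
  have oc: "omegac X Y Z = 8"
    unfolding omegac_formula[OF Zt Yt] B'_def[symmetric]
    using b21 by (simp add: trace2 X_def Y_def A_def pX_def)
  have e: "eta k X > 0" using eta_pos[OF Xn] .
  have "omu 1 X Y Z = - 1/2 * dform (Ldrho (Lop (omu 1) \<rho>) \<rho>) X Y Z"
    using H Xn Yt Zt unfolding kahler_pot_for_def by blast
  then have "c / eta k X * Re (1 * omegac X Y Z) = 0"
    unfolding kahlerJ_formula[OF Xn Yt Zt] xy xz by simp
  then show False using oc e cp by simp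
qed

end

lemma e_mat_mk: "e_mat = mk 0 1 0 0"
  by (simp add: e_mat_def mat2_eq_iff)

theorem mainTheorem5:
  fixes k c :: real and f :: "real \<Rightarrow> real" and \<rho> :: "mat2 \<Rightarrow> real"
  assumes "k > 0" and "c \<ge> 0"
    and "\<And>s. s > 0 \<Longrightarrow> (f has_real_derivative (sqrt (k\<^sup>2 * s + c) / s)) (at s)"
    and "\<And>X. X \<in> nilorb \<Longrightarrow> \<rho> X = f (eta k X)"
  shows "(hk_potential k \<rho> \<longleftrightarrow> c = 0)
         \<and> (c = 0 \<longrightarrow> (\<exists>C. (\<forall>X\<in>nilorb. \<rho> X = 2 * k * sqrt (eta k X) + C)
                     \<and> (\<forall>t>0. \<rho> (cmul (of_real t) e_mat) = 4 * k\<^sup>2 * t + C)))"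
proof -
  interpret hk k c f \<rho> by (unfold_locales) (use assms in auto)
  have I: "kahler_pot_for (omegaI \<rho>) Iop \<rho>" unfolding kahler_pot_for_def omegaI_def by simp
  have J: "Jop k \<rho> = Lop (omu 1) \<rho>" unfolding Jop_def omegaJ_omu ..
  have K: "Kop k \<rho> = Lop (omu (- \<i>)) \<rho>" unfolding Kop_def omegaK_omu ..
  have iff: "hk_potential k \<rho> \<longleftrightarrow> c = 0"
  proof
    assume h: "hk_potential k \<rho>"
    show "c = 0"
    proof (rule ccontr)
      assume "c \<noteq> 0" then have "c > 0" using assms(2) by simp
      from not_kahler[OF this] h show False unfolding hk_potential_def J omegaJ_omu by simp
    qed
  next
    assume c0: "c = 0"
    show "hk_potential k \<rho>" unfolding hk_potential_def J K omegaJ_omu omegaK_omu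
      using I kahler_c0[OF c0] by simp
  qed
  have part2: "\<exists>C. (\<forall>X\<in>nilorb. \<rho> X = 2 * k * sqrt (eta k X) + C)
                     \<and> (\<forall>t>0. \<rho> (cmul (of_real t) e_mat) = 4 * k\<^sup>2 * t + C)" if c0: "c = 0"
  proof -
    define g where "g s = f s - 2 * k * sqrt s" for s
    have gd: "(g has_real_derivative 0) (at s)" if s: "s > 0" for s
    proof -
      have fd: "(f has_real_derivative k / sqrt s) (at s)"
      proof -
        have "sqrt (k\<^sup>2 * s + c) / s = k / sqrt s"
          using s assms(1) c0 by (simp add: real_sqrt_mult field_simps)
        then show ?thesis using assms(3)[OF s] by simp
      qed
      have sd: "((\<lambda>s. 2 * k * sqrt s) has_real_derivative 2 * k * (inverse (sqrt s) / 2)) (at s)"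
        by (rule DERIV_cmult[OF DERIV_real_sqrt[OF s]])
      have "(g has_real_derivative k / sqrt s - 2 * k * (inverse (sqrt s) / 2)) (at s)"
        unfolding g_def[abs_def] by (rule DERIV_diff[OF fd sd])
      moreover have "k / sqrt s - 2 * k * (inverse (sqrt s) / 2) = 0" by (simp add: field_simps)
      ultimately show ?thesis by simp
    qed
    have cont: "continuous_on {a..b} g" if "a > 0" for a b
    proof (rule continuous_at_imp_continuous_on, intro ballI)
      fix x assume "x \<in> {a..b}"
      then have "x > 0" using that by simp
      then show "isCont g x" using gd DERIV_isCont by blast
    qed
    have gc: "g s = g 1" if s: "s > 0" for s
    proof (cases "s < 1")
      case True
      have "g 1 = g s" by (rule DERIV_isconst2[OF True cont[OF s]]) (use s gd True in auto)
      then show ?thesis by simp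
    next
      case False
      show ?thesis
      proof (cases "s = 1")
        case False
        then have "1 < s" using \<open>\<not> s < 1\<close> by simp
        show ?thesis by (rule DERIV_isconst2[OF \<open>1 < s\<close> cont]) (use gd \<open>1 < s\<close> in auto)
      qed simp
    qed
    define C where "C = g 1"
    have fs: "f s = 2 * k * sqrt s + C" if "s > 0" for s
      using gc[OF that] by (simp add: C_def g_def)
    have p1: "\<forall>X\<in>nilorb. \<rho> X = 2 * k * sqrt (eta k X) + C"
      using fs eta_pos assms(4) by simp
    have p2: "\<rho> (cmul (of_real t) e_mat) = 4 * k\<^sup>2 * t + C" if t: "t > 0" for t
    proof -
      have M: "cmul (of_real t) e_mat = mk 0 (of_real t) 0 0" by (simp add: e_mat_mk mat2_eq_iff)
      have n: "cmul (of_real t) e_mat \<in> nilorb" unfolding M using t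
        by (simp add: nilorb_def sl2_iff mat2_eq_iff)
      have et: "eta k (cmul (of_real t) e_mat) = (2 * k * t)\<^sup>2"
        unfolding eta_inner M by (simp add: inner_mat2 inner_complex_def power2_eq_square)
      have "sqrt (eta k (cmul (of_real t) e_mat)) = 2 * k * t" unfolding et using t assms(1) by simp
      then show ?thesis using p1 n by (simp add: power2_eq_square)
    qed
    show ?thesis using p1 p2 by blast
  qed
  show ?thesis using iff part2 by blast
qed


end
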